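(* Run the mechanism BFM-SWM described in the context with arbitrary $B>0$, $\alpha>1$, $\beta>1$, $\epsilon>0$, $\ell\in\{1,2\}$, with all sellers behaving truthfully. Then for every $i\in[\ell]$, $t\in[M]$, and every $A\in\{S_{i,t}\}\cup\{u^*\}$, $$v(A)\ \le\ \frac{v(A)-p(A)}{1-1/\beta}\ \le\ \frac{v(A)-c(A)}{1-1/\beta}.$$
   Context: Setting. $\mathcal{N}$ is a finite set of $n$ sellers. The valuation $v:2^{\mathcal{N}}\to\mathbb{R}_{\ge 0}$ satisfies $v(\emptyset)=0$ and is submodular (for $X\subseteq Y\subseteq\mathcal{N}$ and $u\notin Y$, $v(u\mid Y)\le v(u\mid X)$), not necessarily monotone, where $v(S\mid T)=v(S\cup T)-v(T)$, $v(u\mid T)=v(\{u\}\mid T)$. Each seller $u$ has a private cost $c(u)\ge 0$; $c(X)=\sum_{u\in X}c(u)$. $B>0$ is the budget, $[\ell]=\{1,\dots,\ell\}$. Sellers behave truthfully: a seller $u$ offered price $q$ accepts iff $c(u)\le q$. Mechanism BFM-SWM (inputs $B$, $\alpha>1$, $\beta>1$, $\epsilon>0$, $\ell\in\{1,2\}$): 1. Offer every seller the price $B$; let $R$ be the set of sellers who accept, and set $p(u)=B$ for $u\in R$. 2. Set $t=0$, $\rho_0=\epsilon/\alpha$, $u^*=\emptyset$ ($u^*$ is a set of at most one seller), and $S_{i,0}=\emptyset$ for $i\in[\ell]$. 3. Repeat rounds: set $t\leftarrow t+1$, $\rho_t=\alpha\rho_{t-1}$, $S_{i,t}=\emptyset$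 for all $i\in[\ell]$. Process the sellers $u\in R\setminus(\bigcup_{i=1}^{\ell}S_{i,t-1}\cup u^* )$ one at a time in a fixed order. For each such $u$: pick $j\in\arg\max_{i\in[\ell]}v(u\mid S_{i,t})$ (current contents); update $p(u)\leftarrow\min\{p(u),\ v(u\mid S_{j,t})/(\beta+\rho_t/B)\}$ and offer $p(u)$ to $u$. If $u$ accepts: if $v(S_{j,t}\cup\{u\})-p(S_{j,t}\cup\{u\})>\rho_t$ (current prices, $p(X)=\sum_{w\in X}p(w)$), set $u^*\leftarrow\{u\}$ and end the round immediately; otherwise add $u$ to $S_{j,t}$. If $u$ rejects, remove $u$ from $R$. After the round, stop if $R\setminus\left(\bigcup_{i=1}^{\ell}(S_{i,t-1}\cup S_{i,t})\cup u^*\right)=\emptyset$; otherwise start another round. 4. Let $M$ be the final value of $t$. Output $S^*\in\arg\max_{A\in\{S_{i,t}: i\in[\ell],\ t\in\{M-1,M\}\}\cup\{u^*\}}\big(v(A)-p(A)\big)$, paying each $u\in S^*$ its current price $p(u)$. Notation: $S_{i,t}$ denotes the contents of that candidate set at the end of round $t$, and $u^*$ its value at termination. For $A=S_{i,t}$, $p(A)=\sum_{u\in A}p(u)$ where $p(u)$ is the price $u$ accepted when it was added to $S_{i,t}$; for $A=u^*$, $p(u^* )$ is the price its member accepted when $u^*$ was last set. *)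

theory Defs
  imports Complex_Main
begin

text \<open>Candidate sets are stored as lists of pairs (seller, price accepted when the seller was
  added), in insertion order; u* is stored as an optional pair (seller, accepted price).\<close>

record 'a bfm_state =
  Rs  :: "'a set"
  pr  :: "'a \<Rightarrow> real"
  Sc  :: "nat \<Rightarrow> ('a \<times> real) list"     \<comment> \<open>S_{i,t}, current round\<close>
  Sp  :: "nat \<Rightarrow> ('a \<times> real) list"     \<comment> \<open>S_{i,t-1}, previous round\<close>
  us  :: "('a \<times> real) option"
  brk :: bool

definition elems :: "('a \<times> real) list \<Rightarrow> 'a set" where
  "elems L = fst ` set L"

definition ustar_list :: "('a \<times> real) option \<Rightarrow> ('a \<times> real) list" where
  "ustar_list x = (case x of None \<Rightarrow> [] | Some q \<Rightarrow> [q])"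

definition rho :: "real \<Rightarrow> real \<Rightarrow> nat \<Rightarrow> real" where
  "rho eps alpha t = (eps / alpha) * alpha ^ t"

text \<open>Processing one seller u in round t (with rho = rho_t).
  The tie-breaking rule tb picks an index j in the argmax (assumed in the theorem).\<close>
definition process_seller ::
  "('a set \<Rightarrow> real) \<Rightarrow> ('a \<Rightarrow> real) \<Rightarrow> real \<Rightarrow> real \<Rightarrow> real
   \<Rightarrow> (nat \<Rightarrow> 'a bfm_state \<Rightarrow> 'a \<Rightarrow> nat) \<Rightarrow> nat \<Rightarrow> 'a \<Rightarrow> 'a bfm_state \<Rightarrow> 'a bfm_state" where
  "process_seller v c B beta r tb t u s =
     (if brk s then s else
      (let j = tb t s u;
           S = elems (Sc s j);
           newp = min (pr s u) ((v (insert u S) - v S) / (beta + r / B));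
           p' = (pr s)(u := newp)
       in if c u \<le> newp then
            (if v (insert u S) - sum p' (insert u S) > r
             then s\<lparr>pr := p', us := Some (u, newp), brk := True\<rparr>
             else s\<lparr>pr := p', Sc := (Sc s)(j := Sc s j @ [(u, newp)])\<rparr>)
          else s\<lparr>pr := p', Rs := Rs s - {u}\<rparr>))"

definition bfm_round ::
  "('a set \<Rightarrow> real) \<Rightarrow> ('a \<Rightarrow> real) \<Rightarrow> real \<Rightarrow> real \<Rightarrow> real \<Rightarrow> real \<Rightarrow> nat \<Rightarrow> 'a list
   \<Rightarrow> (nat \<Rightarrow> 'a bfm_state \<Rightarrow> 'a \<Rightarrow> nat) \<Rightarrow> nat \<Rightarrow> 'a bfm_state \<Rightarrow> 'a bfm_state" where
  "bfm_round v c B alpha beta eps ell ord tb t s =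
     (let todo = filter (\<lambda>u. u \<in> Rs s - (\<Union>i\<in>{1..ell}. elems (Sc s i))
                                      - elems (ustar_list (us s))) ord;
          s0 = s\<lparr>Sp := Sc s, Sc := (\<lambda>_. []), brk := False\<rparr>
      in fold (process_seller v c B beta (rho eps alpha t) tb t) todo s0)"

definition bfm_init :: "('a \<Rightarrow> real) \<Rightarrow> real \<Rightarrow> 'a list \<Rightarrow> 'a bfm_state" where
  "bfm_init c B ord =
     \<lparr>Rs = {u \<in> set ord. c u \<le> B}, pr = (\<lambda>_. B), Sc = (\<lambda>_. []), Sp = (\<lambda>_. []),
      us = None, brk = False\<rparr>"

fun bfm_run ::
  "('a set \<Rightarrow> real) \<Rightarrow> ('a \<Rightarrow> real) \<Rightarrow> real \<Rightarrow> real \<Rightarrow> real \<Rightarrow> real \<Rightarrow> nat \<Rightarrow> 'a list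
   \<Rightarrow> (nat \<Rightarrow> 'a bfm_state \<Rightarrow> 'a \<Rightarrow> nat) \<Rightarrow> nat \<Rightarrow> 'a bfm_state" where
  "bfm_run v c B alpha beta eps ell ord tb 0 = bfm_init c B ord"
| "bfm_run v c B alpha beta eps ell ord tb (Suc t) =
     bfm_round v c B alpha beta eps ell ord tb (Suc t) (bfm_run v c B alpha beta eps ell ord tb t)"

definition bfm_stops :: "nat \<Rightarrow> 'a bfm_state \<Rightarrow> bool" where
  "bfm_stops ell s \<longleftrightarrow>
     Rs s - ((\<Union>i\<in>{1..ell}. elems (Sp s i) \<union> elems (Sc s i)) \<union> elems (ustar_list (us s))) = {}"

definition submodular_on :: "'a set \<Rightarrow> ('a set \<Rightarrow> real) \<Rightarrow> bool" where
  "submodular_on N v \<longleftrightarrow>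
     (\<forall>X Y u. X \<subseteq> Y \<longrightarrow> Y \<subseteq> N \<longrightarrow> u \<in> N \<longrightarrow> u \<notin> Y \<longrightarrow>
        v (insert u Y) - v Y \<le> v (insert u X) - v X)"

end

theory Submission
  imports Defs
begin

definition inv_st :: "'a set \<Rightarrow> ('a set \<Rightarrow> real) \<Rightarrow> ('a \<Rightarrow> real) \<Rightarrow> real \<Rightarrow> 'a bfm_state \<Rightarrow> bool" where
  "inv_st N v c beta s \<longleftrightarrow>
    (\<forall>j. (\<forall>x\<in>set (Sc s j). fst x \<in> N \<and> c (fst x) \<le> snd x)
         \<and> beta * sum_list (map snd (Sc s j)) \<le> v (elems (Sc s j)))
    \<and> (\<forall>u p. us s = Some (u, p) \<longrightarrow> u \<in> N \<and> c u \<le> p \<and> beta * p \<le> v {u})"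

lemma elems_snoc: "elems (L @ [(u, p)]) = insert u (elems L)"
  by (auto simp: elems_def)

lemma elems_sub: "\<forall>x\<in>set L. fst x \<in> N \<Longrightarrow> elems L \<subseteq> N"
  by (auto simp: elems_def)

lemma process_inv:
  assumes I: "inv_st N v c beta s" and uN: "u \<in> N" and r: "r \<ge> 0" and B: "B > 0"
    and beta: "beta > 1" and cn: "\<forall>u\<in>N. c u \<ge> 0"
    and vs: "submodular_on N v" and vn: "\<forall>X. X \<subseteq> N \<longrightarrow> v X \<ge> 0" and ve: "v {} = 0"
  shows "inv_st N v c beta (process_seller v c B beta r tb t u s)"
proof -
  define j where "j = tb t s u"
  define S where "S = elems (Sc s j)"
  define m where "m = v (insert u S) - v S"
  define newp where "newp = min (pr s u) (m / (beta + r / B))"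
  have SN: "S \<subseteq> N" using I elems_sub unfolding inv_st_def S_def by blast
  have key: "beta * newp \<le> m \<and> m \<le> v {u}" if cu: "c u \<le> newp"
  proof
    have d: "beta + r / B \<ge> beta" using r B by simp
    have "0 \<le> c u" using cn uN by auto
    hence "0 \<le> m / (beta + r / B)" using cu newp_def by linarith
    hence m0: "0 \<le> m" using d beta by (simp add: zero_le_divide_iff)
    have "m / (beta + r / B) \<le> m / beta" using d beta m0
      by (simp add: divide_left_mono)
    hence "newp \<le> m / beta" using newp_def by linarith
    thus "beta * newp \<le> m" using beta by (simp add: field_simps)
    show "m \<le> v {u}"
    proof (cases "u \<in> S")
      case True
      hence "m = 0" by (simp add: m_def insert_absorb)
      thus ?thesis using vn uN by auto
    next
      case False
      have "v (insert u S) - v S \<le> v (insert u {}) - v {}"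
        using vs SN uN False unfolding submodular_on_def by blast
      thus ?thesis using ve m_def by simp
    qed
  qed
  show ?thesis
  proof (cases "brk s")
    case True thus ?thesis using I by (simp add: process_seller_def)
  next
    case False
    note defs = j_def[symmetric] S_def[symmetric] m_def[symmetric] newp_def[symmetric]
    show ?thesis
    proof (cases "c u \<le> newp")
      case cu: True
      note k = key[OF cu]
      show ?thesis
      proof (cases "v (insert u S) - sum ((pr s)(u := newp)) (insert u S) > r")
        case True
        thus ?thesis using False cu I k uN
          unfolding process_seller_def Let_def defs by (simp add: inv_st_def)
      next
        case nt: False
        have sc: "Sc (process_seller v c B beta r tb t u s) = (Sc s)(j := Sc s j @ [(u, newp)])"
          and uss: "us (process_seller v c B beta r tb t u s) = us s"
          using False cu nt unfolding process_seller_def Let_def defs by simp_all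
        show ?thesis unfolding inv_st_def sc uss
        proof (intro conjI allI)
          fix i
          show "(\<forall>x\<in>set (((Sc s)(j := Sc s j @ [(u, newp)])) i). fst x \<in> N \<and> c (fst x) \<le> snd x)"
            using I cu uN unfolding inv_st_def by auto
          show "beta * sum_list (map snd (((Sc s)(j := Sc s j @ [(u, newp)])) i))
              \<le> v (elems (((Sc s)(j := Sc s j @ [(u, newp)])) i))"
          proof (cases "i = j")
            case True
            have "beta * sum_list (map snd (Sc s j)) \<le> v S" using I S_def unfolding inv_st_def by blast
            thus ?thesis using True k m_def by (simp add: elems_snoc S_def[symmetric] algebra_simps)
          next
            case False thus ?thesis using I unfolding inv_st_def by simp
          qed
        next
          fix u' p
          show "us s = Some (u', p) \<longrightarrow> u' \<in> N \<and> c u' \<le> p \<and> beta * p \<le> v {u'}"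
            using I unfolding inv_st_def by blast
        qed
      qed
    next
      case cu: False
      thus ?thesis using False I
        unfolding process_seller_def Let_def defs by (simp add: inv_st_def)
    qed
  qed
qed

lemma fold_inv:
  assumes "inv_st N v c beta s" "set todo \<subseteq> N" "r \<ge> 0" "B > 0"
    "beta > 1" "\<forall>u\<in>N. c u \<ge> 0"
    "submodular_on N v" "\<forall>X. X \<subseteq> N \<longrightarrow> v X \<ge> 0" "v {} = 0"
  shows "inv_st N v c beta (fold (process_seller v c B beta r tb t) todo s)"
  using assms(1,2)
proof (induction todo arbitrary: s)
  case Nil thus ?case by simp
next
  case (Cons a todo)
  have "inv_st N v c beta (process_seller v c B beta r tb t a s)"
    using process_inv[of N v c beta s a r B] Cons.prems assms(3-) by auto
  thus ?case using Cons by simp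
qed

lemma run_inv:
  assumes "set ord = N" "B > 0" "alpha > 1" "eps > 0"
    "beta > 1" "\<forall>u\<in>N. c u \<ge> 0"
    "submodular_on N v" "\<forall>X. X \<subseteq> N \<longrightarrow> v X \<ge> 0" "v {} = 0"
  shows "inv_st N v c beta (bfm_run v c B alpha beta eps ell ord tb t)"
proof (induction t)
  case 0
  show ?case using assms by (simp add: bfm_init_def inv_st_def elems_def)
next
  case (Suc t)
  let ?s = "bfm_run v c B alpha beta eps ell ord tb t"
  let ?s0 = "?s\<lparr>Sp := Sc ?s, Sc := (\<lambda>_. []), brk := False\<rparr>"
  have i0: "inv_st N v c beta ?s0" using Suc assms by (simp add: inv_st_def elems_def)
  have r: "rho eps alpha (Suc t) \<ge> 0" using assms by (simp add: rho_def)
  show ?case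
    using fold_inv[OF i0 _ r assms(2) assms(5-)] assms(1)
    by (simp add: bfm_round_def Let_def)
qed

lemma sum_elems_le:
  assumes "\<forall>x\<in>set A. fst x \<in> N \<and> c (fst x) \<le> snd x" "\<forall>u\<in>N. c u \<ge> (0::real)"
  shows "sum c (elems A) \<le> sum_list (map snd A)"
  using assms(1)
proof (induction A)
  case Nil thus ?case by (simp add: elems_def)
next
  case (Cons a A)
  have e: "elems (a # A) = insert (fst a) (elems A)" by (simp add: elems_def)
  have f: "finite (elems A)" by (simp add: elems_def)
  have ca: "0 \<le> c (fst a)" "c (fst a) \<le> snd a" using Cons.prems assms(2) by auto
  have "sum c (elems (a # A)) \<le> c (fst a) + sum c (elems A)"
    unfolding e using f ca by (simp add: sum.insert_if)
  thus ?case using Cons ca by simp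
qed

lemma final:
  fixes beta :: real
  assumes "beta > 1" "\<forall>x\<in>set A. fst x \<in> N \<and> c (fst x) \<le> snd x" "\<forall>u\<in>N. c u \<ge> 0"
    "beta * sum_list (map snd A) \<le> v (elems A)"
  shows "v (elems A) \<le> (v (elems A) - sum_list (map snd A)) / (1 - 1 / beta)
         \<and> (v (elems A) - sum_list (map snd A)) / (1 - 1 / beta)
             \<le> (v (elems A) - sum c (elems A)) / (1 - 1 / beta)"
proof
  have k: "1 - 1 / beta > 0" using assms(1) by simp
  have "v (elems A) * (1 - 1 / beta) \<le> v (elems A) - sum_list (map snd A)"
    using assms(1,4) by (simp add: field_simps)
  thus "v (elems A) \<le> (v (elems A) - sum_list (map snd A)) / (1 - 1 / beta)"
    using k by (simp add: le_divide_eq)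
  show "(v (elems A) - sum_list (map snd A)) / (1 - 1 / beta)
             \<le> (v (elems A) - sum c (elems A)) / (1 - 1 / beta)"
    using sum_elems_le[OF assms(2,3)] k by (simp add: divide_right_mono)
qed

theorem lemma4p6:
  fixes N :: "'a set" and ord :: "'a list" and v :: "'a set \<Rightarrow> real" and c :: "'a \<Rightarrow> real"
    and B alpha beta eps :: real and ell M :: nat
    and tb :: "nat \<Rightarrow> 'a bfm_state \<Rightarrow> 'a \<Rightarrow> nat"
  assumes ord: "distinct ord" "set ord = N"
    and v_empty: "v {} = 0"
    and v_nonneg: "\<forall>X. X \<subseteq> N \<longrightarrow> v X \<ge> 0"
    and v_sub: "submodular_on N v"
    and c_nonneg: "\<forall>u\<in>N. c u \<ge> 0"
    and params: "B > 0" "alpha > 1" "beta > 1" "eps > 0" "ell \<in> {1, 2}"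
    and tb: "\<forall>t s u. tb t s u \<in> {1..ell} \<and>
               (\<forall>i\<in>{1..ell}. v (insert u (elems (Sc s i))) - v (elems (Sc s i))
                   \<le> v (insert u (elems (Sc s (tb t s u)))) - v (elems (Sc s (tb t s u))))"
    and M: "M \<ge> 1"
      "bfm_stops ell (bfm_run v c B alpha beta eps ell ord tb M)"
      "\<forall>t. 1 \<le> t \<and> t < M \<longrightarrow> \<not> bfm_stops ell (bfm_run v c B alpha beta eps ell ord tb t)"
  shows "\<forall>A \<in> {Sc (bfm_run v c B alpha beta eps ell ord tb t) i | i t. i \<in> {1..ell} \<and> t \<in> {1..M}}
              \<union> {ustar_list (us (bfm_run v c B alpha beta eps ell ord tb M))}.
           v (elems A) \<le> (v (elems A) - sum_list (map snd A)) / (1 - 1 / beta)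
         \<and> (v (elems A) - sum_list (map snd A)) / (1 - 1 / beta)
             \<le> (v (elems A) - sum c (elems A)) / (1 - 1 / beta)"
proof
  fix A
  assume A: "A \<in> {Sc (bfm_run v c B alpha beta eps ell ord tb t) i | i t. i \<in> {1..ell} \<and> t \<in> {1..M}}
              \<union> {ustar_list (us (bfm_run v c B alpha beta eps ell ord tb M))}"
  have inv: "\<And>t. inv_st N v c beta (bfm_run v c B alpha beta eps ell ord tb t)"
    using run_inv[OF ord(2) params(1,2,4,3) c_nonneg v_sub v_nonneg v_empty] by blast
  have P: "(\<forall>x\<in>set A. fst x \<in> N \<and> c (fst x) \<le> snd x) \<and> beta * sum_list (map snd A) \<le> v (elems A)"
  proof (cases "A = ustar_list (us (bfm_run v c B alpha beta eps ell ord tb M))")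
    case True
    show ?thesis
    proof (cases "us (bfm_run v c B alpha beta eps ell ord tb M)")
      case None thus ?thesis using True v_empty by (simp add: ustar_list_def elems_def)
    next
      case (Some q)
      obtain u p where q: "q = (u, p)" by (cases q)
      have "u \<in> N \<and> c u \<le> p \<and> beta * p \<le> v {u}" using inv[of M] Some q unfolding inv_st_def by blast
      thus ?thesis using True Some q by (simp add: ustar_list_def elems_def)
    qed
  next
    case False
    then obtain i t where "A = Sc (bfm_run v c B alpha beta eps ell ord tb t) i" using A by blast
    thus ?thesis using inv[of t] unfolding inv_st_def by blast
  qed
  show "v (elems A) \<le> (v (elems A) - sum_list (map snd A)) / (1 - 1 / beta)
         \<and> (v (elems A) - sum_list (map snd A)) / (1 - 1 / beta)
             \<le> (v (elems A) - sum c (elems A)) / (1 - 1 / beta)"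
    using final[OF params(3) _ c_nonneg] P by blast
qed

end
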